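(* For all $n\ge0$, all $0\le k\le n$ and all complex $a,b,c_0,c_\infty$, $$E_{n,k}(a,b;c_0,c_\infty)=\sum_{j=k}^n(-1)^{j-k}\binom jk(c_0+c_\infty)^{\overline{n-j},b}\,S_{n,n-j}(-a,b;c_\infty),$$ $$(c_0+c_\infty)^{\overline{n-k},b}\,S_{n,n-k}(-a,b;c_\infty)=\sum_{j=k}^n\binom jk E_{n,j}(a,b;c_0,c_\infty).$$
   Context: GKP triangle $\left[\begin{array}{cc|c}\alpha,&\beta&\gamma\\ \alpha',&\beta'&\gamma'\end{array}\right]_{n,k}$: defined by $T_{0,0}=1$, $T_{n,k}=0$ if $n<0$, $k<0$ or $k>n$, and $T_{n+1,k+1}=[\alpha n+\beta(k+1)+\gamma]T_{n,k+1}+[\alpha' n+\beta' k+\gamma']T_{n,k}$ for $n\ge0$, $k\in\mathbb Z$. Hsu–Shiue Stirling numbers: $S_{n,k}(a,b;r):=\left[\begin{array}{cc|c}-a,&b&r\\ 0,&0&1\end{array}\right]_{n,k}$. Generalized Eulerian numbers: $E_{n,k}(a,b;c_0,c_\infty):=\left[\begin{array}{cc|c}-a,&b&c_0\\ a+b,&-b&c_\infty\end{array}\right]_{n,k}$, i.e. $E_{n+1,k+1}=[-an+b(k+1)+c_0]E_{n,k+1}+[(a+b)n-bk+c_\infty]E_{n,k}$. $(x)^{\overline n,b}=\prod_{i=0}^{n-1}(x+ib)$, $(x)^{\underline n,a}=\prod_{i=0}^{n-1}(x-ia)$. *)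

theory Defs
  imports Complex_Main
begin

fun GKP :: "complex \<Rightarrow> complex \<Rightarrow> complex \<Rightarrow> complex \<Rightarrow> complex \<Rightarrow> complex \<Rightarrow> nat \<Rightarrow> int \<Rightarrow> complex" where
  "GKP al be ga al' be' ga' 0 k = (if k = 0 then 1 else 0)"
| "GKP al be ga al' be' ga' (Suc n) k =
     (if k < 0 \<or> k > int (Suc n) then 0 else
       (al * of_nat n + be * of_int k + ga) * GKP al be ga al' be' ga' n k
     + (al' * of_nat n + be' * of_int (k - 1) + ga') * GKP al be ga al' be' ga' n (k - 1))"

definition HS_Stirling :: "nat \<Rightarrow> int \<Rightarrow> complex \<Rightarrow> complex \<Rightarrow> complex \<Rightarrow> complex" where
  "HS_Stirling n k a b r = GKP (- a) b r 0 0 1 n k"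

definition GEuler :: "nat \<Rightarrow> int \<Rightarrow> complex \<Rightarrow> complex \<Rightarrow> complex \<Rightarrow> complex \<Rightarrow> complex" where
  "GEuler n k a b c0 cinf = GKP (- a) b c0 (a + b) (- b) cinf n k"

definition rising_inc :: "complex \<Rightarrow> nat \<Rightarrow> complex \<Rightarrow> complex" where
  "rising_inc x n b = (\<Prod>i<n. x + of_nat i * b)"

end

theory Submission imports Defs begin

lemma binom_j: "j * (j choose k) = k * (j choose k) + Suc k * (j choose Suc k)"
proof (induction j arbitrary: k)
  case 0 then show ?case by (cases k) auto
next
  case (Suc j)
  show ?case
  proof (cases k)
    case 0 then show ?thesis by simp
  next
    case (Suc k')
    show ?thesis using Suc.IH[of k'] Suc.IH[of k] unfolding Suc by (simp add: algebra_simps)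
  qed
qed

lemma GKP_out: "k < 0 \<or> k > int n \<Longrightarrow> GKP al be ga al' be' ga' n k = 0"
  by (induction n arbitrary: k) auto

lemma GKP_rec: "GKP al be ga al' be' ga' (Suc n) k =
  (al * of_nat n + be * of_int k + ga) * GKP al be ga al' be' ga' n k
     + (al' * of_nat n + be' * of_int (k - 1) + ga') * GKP al be ga al' be' ga' n (k - 1)"
  by (auto simp: GKP_out)

lemma E_zero: "j > n \<Longrightarrow> GEuler n (int j) a b c0 cinf = 0"
  unfolding GEuler_def by (simp add: GKP_out)

lemma E_rec0: "GEuler (Suc n) 0 a b c0 cinf = (- a * of_nat n + c0) * GEuler n 0 a b c0 cinf"
  unfolding GEuler_def by (simp add: GKP_out)

lemma E_recS: "GEuler (Suc n) (int (Suc j)) a b c0 cinf =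
   (- a * of_nat n + b * of_nat (Suc j) + c0) * GEuler n (int (Suc j)) a b c0 cinf
   + ((a + b) * of_nat n - b * of_nat j + cinf) * GEuler n (int j) a b c0 cinf"
  unfolding GEuler_def by (subst GKP_rec) (simp add: algebra_simps)

lemma S_zero: "m > n \<Longrightarrow> HS_Stirling n (int m) a b r = 0"
  unfolding HS_Stirling_def by (simp add: GKP_out)

lemma S_rec0: "HS_Stirling (Suc n) 0 (- a) b r = (a * of_nat n + r) * HS_Stirling n 0 (- a) b r"
  unfolding HS_Stirling_def by (simp add: GKP_out)

lemma S_recS: "HS_Stirling (Suc n) (int (Suc m)) (- a) b r =
   (a * of_nat n + b * of_nat (Suc m) + r) * HS_Stirling n (int (Suc m)) (- a) b r
   + HS_Stirling n (int m) (- a) b r"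
  unfolding HS_Stirling_def by (subst GKP_rec) (simp add: algebra_simps)

lemma S_00: "HS_Stirling 0 0 a b r = 1" unfolding HS_Stirling_def by simp
lemma E_00: "GEuler 0 0 a b c0 cinf = 1" unfolding GEuler_def by simp

lemma R_0: "rising_inc x 0 b = 1" unfolding rising_inc_def by simp
lemma R_Suc: "rising_inc x (Suc m) b = rising_inc x m b * (x + of_nat m * b)"
  unfolding rising_inc_def by simp

definition FF :: "complex \<Rightarrow> complex \<Rightarrow> complex \<Rightarrow> complex \<Rightarrow> nat \<Rightarrow> nat \<Rightarrow> complex" where
  "FF a b c0 cinf n k = (if k \<le> n then rising_inc (c0 + cinf) (n - k) b
      * HS_Stirling n (int (n - k)) (- a) b cinf else 0)"

definition GG :: "complex \<Rightarrow> complex \<Rightarrow> complex \<Rightarrow> complex \<Rightarrow> nat \<Rightarrow> nat \<Rightarrow> complex" where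
  "GG a b c0 cinf n k = (\<Sum>j\<le>n. of_nat (j choose k) * GEuler n (int j) a b c0 cinf)"

lemma FF_rec0: "FF a b c0 cinf (Suc n) 0 = (c0 + cinf + of_nat n * b) * FF a b c0 cinf n 0"
proof -
  have "HS_Stirling (Suc n) (int (Suc n)) (- a) b cinf = HS_Stirling n (int n) (- a) b cinf"
    using S_zero[of n "Suc n" "-a" b cinf] by (subst S_recS) simp
  then show ?thesis unfolding FF_def by (simp add: R_Suc)
qed

lemma FF_recS: "FF a b c0 cinf (Suc n) (Suc k) =
   (c0 + cinf + (of_nat n - of_nat k - 1) * b) * FF a b c0 cinf n (Suc k)
   + (a * of_nat n + b * (of_nat n - of_nat k) + cinf) * FF a b c0 cinf n k"
proof -
  consider "k > n" | "k = n" | "k < n" by linarith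
  then show ?thesis
  proof cases
    case 1 then show ?thesis unfolding FF_def by simp
  next
    case 2
    have "HS_Stirling (Suc n) 0 (- a) b cinf = (a * of_nat n + cinf) * HS_Stirling n 0 (- a) b cinf"
      by (rule S_rec0)
    then show ?thesis unfolding FF_def using 2 by (simp add: R_0)
  next
    case 3
    obtain m where n: "n = Suc (k + m)" using less_imp_Suc_add[OF 3] by auto
    have e1: "Suc n - Suc k = Suc m" "n - Suc k = m" "n - k = Suc m" using n by auto
    let ?R = "rising_inc (c0 + cinf)" and ?S = "\<lambda>n m. HS_Stirling n (int m) (- a) b cinf"
    have A: "FF a b c0 cinf (Suc n) (Suc k) = ?R (Suc m) b * ?S (Suc n) (Suc m)"
      unfolding FF_def using 3 e1 by simp
    have B: "FF a b c0 cinf n (Suc k) = ?R m b * ?S n m"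
      unfolding FF_def using 3 e1 by simp
    have C: "FF a b c0 cinf n k = ?R (Suc m) b * ?S n (Suc m)"
      unfolding FF_def using 3 e1 by simp
    have D: "?S (Suc n) (Suc m) = (a * of_nat n + b * of_nat (Suc m) + cinf) * ?S n (Suc m) + ?S n m"
      by (rule S_recS)
    have N: "(of_nat n :: complex) = of_nat k + of_nat m + 1" using n by simp
    show ?thesis unfolding A B C D R_Suc N by (simp add: algebra_simps)
  qed
qed


lemma E_rec_gen: "GEuler (Suc n) (int j) a b c0 cinf =
   (- a * of_nat n + b * of_nat j + c0) * GEuler n (int j) a b c0 cinf
   + ((a + b) * of_nat n - b * (of_nat j - 1) + cinf) * GEuler n (int j - 1) a b c0 cinf"
  unfolding GEuler_def by (subst GKP_rec) (simp add: algebra_simps)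

lemma GG_sum: "GG a b c0 cinf (Suc n) k = (\<Sum>j\<le>n. (of_nat (j choose k) * (- a * of_nat n + b * of_nat j + c0)
     + of_nat (Suc j choose k) * ((a + b) * of_nat n - b * of_nat j + cinf)) * GEuler n (int j) a b c0 cinf)"
proof -
  let ?E = "\<lambda>j. GEuler n j a b c0 cinf"
  have "GG a b c0 cinf (Suc n) k = (\<Sum>j\<le>Suc n. of_nat (j choose k) * (- a * of_nat n + b * of_nat j + c0) * ?E (int j))
     + (\<Sum>j\<le>Suc n. of_nat (j choose k) * ((a + b) * of_nat n - b * (of_nat j - 1) + cinf) * ?E (int j - 1))"
    unfolding GG_def E_rec_gen sum.distrib[symmetric] by (rule sum.cong) (simp_all add: algebra_simps)
  also have "(\<Sum>j\<le>Suc n. of_nat (j choose k) * (- a * of_nat n + b * of_nat j + c0) * ?E (int j))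
     = (\<Sum>j\<le>n. of_nat (j choose k) * (- a * of_nat n + b * of_nat j + c0) * ?E (int j))"
    using E_zero[of n "Suc n" a b c0 cinf] by (simp del: of_nat_Suc)
  also have "(\<Sum>j\<le>Suc n. of_nat (j choose k) * ((a + b) * of_nat n - b * (of_nat j - 1) + cinf) * ?E (int j - 1))
     = (\<Sum>j\<le>n. of_nat (Suc j choose k) * ((a + b) * of_nat n - b * of_nat j + cinf) * ?E (int j))"
    unfolding sum.atMost_Suc_shift by (simp add: GEuler_def GKP_out)
  finally show ?thesis unfolding sum.distrib[symmetric] by (simp add: algebra_simps)
qed

lemma GG_rec0: "GG a b c0 cinf (Suc n) 0 = (c0 + cinf + of_nat n * b) * GG a b c0 cinf n 0"
  unfolding GG_sum unfolding GG_def sum_distrib_left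
  by (rule sum.cong) (simp_all add: algebra_simps)

lemma GG_recS: "GG a b c0 cinf (Suc n) (Suc k) =
   (c0 + cinf + (of_nat n - of_nat k - 1) * b) * GG a b c0 cinf n (Suc k)
   + (a * of_nat n + b * (of_nat n - of_nat k) + cinf) * GG a b c0 cinf n k"
  unfolding GG_sum unfolding GG_def sum_distrib_left sum.distrib[symmetric]
proof (rule sum.cong)
  fix j assume "j \<in> {..n}"
  have bj: "(of_nat j :: complex) * of_nat (j choose k) = of_nat k * of_nat (j choose k) + (of_nat k + 1) * of_nat (j choose Suc k)"
    using arg_cong[OF binom_j[of j k], of "of_nat :: nat \<Rightarrow> complex"] by (simp add: algebra_simps)
  have "(of_nat (j choose Suc k) * (- a * of_nat n + b * of_nat j + c0) +
        of_nat (Suc j choose Suc k) * ((a + b) * of_nat n - b * of_nat j + cinf))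
      = (c0 + cinf + (of_nat n - of_nat k - 1) * b) * of_nat (j choose Suc k)
        + (a * of_nat n + b * (of_nat n - of_nat k) + cinf) * of_nat (j choose k)"
  proof -
    have "of_nat (Suc j choose Suc k) = (of_nat (j choose Suc k) + of_nat (j choose k) :: complex)" by simp
    then have "(of_nat (j choose Suc k) * (- a * of_nat n + b * of_nat j + c0) +
        of_nat (Suc j choose Suc k) * ((a + b) * of_nat n - b * of_nat j + cinf))
      - ((c0 + cinf + (of_nat n - of_nat k - 1) * b) * of_nat (j choose Suc k)
        + (a * of_nat n + b * (of_nat n - of_nat k) + cinf) * of_nat (j choose k))
      = b * (of_nat k * of_nat (j choose k) + (of_nat k + 1) * of_nat (j choose Suc k) - of_nat j * of_nat (j choose k))"
      by (simp add: algebra_simps)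
    also have "\<dots> = 0" using bj by simp
    finally show ?thesis by simp
  qed
  moreover have "(c0 + cinf + (of_nat n - of_nat k - 1) * b) * (of_nat (j choose Suc k) * GEuler n (int j) a b c0 cinf)
       + (a * of_nat n + b * (of_nat n - of_nat k) + cinf) * (of_nat (j choose k) * GEuler n (int j) a b c0 cinf)
     = ((c0 + cinf + (of_nat n - of_nat k - 1) * b) * of_nat (j choose Suc k)
        + (a * of_nat n + b * (of_nat n - of_nat k) + cinf) * of_nat (j choose k)) * GEuler n (int j) a b c0 cinf"
    by (simp add: algebra_simps)
  ultimately show "(of_nat (j choose Suc k) * (- a * of_nat n + b * of_nat j + c0) +
        of_nat (Suc j choose Suc k) * ((a + b) * of_nat n - b * of_nat j + cinf)) * GEuler n (int j) a b c0 cinf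
     = (c0 + cinf + (of_nat n - of_nat k - 1) * b) * (of_nat (j choose Suc k) * GEuler n (int j) a b c0 cinf)
       + (a * of_nat n + b * (of_nat n - of_nat k) + cinf) * (of_nat (j choose k) * GEuler n (int j) a b c0 cinf)"
    by simp
qed simp


lemma FF_GG: "FF a b c0 cinf n k = GG a b c0 cinf n k"
proof (induction n arbitrary: k)
  case 0
  then show ?case by (cases k) (simp_all add: FF_def GG_def R_0 S_00 E_00)
next
  case (Suc n)
  then show ?case by (cases k) (simp_all add: FF_rec0 GG_rec0 FF_recS GG_recS)
qed

lemma alt_inner:
  assumes "i \<le> n"
  shows "(\<Sum>j=k..n. (-1) ^ (j - k) * of_nat (j choose k) * of_nat (i choose j) :: complex)
     = (if i = k then 1 else 0)"
proof (cases "i < k")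
  case True
  have Z: "\<forall>j\<in>{k..n}. (-1) ^ (j - k) * of_nat (j choose k) * of_nat (i choose j) = (0::complex)"
    using True by auto
  show ?thesis using True sum.neutral[OF Z] by simp
next
  case False
  then have ki: "k \<le> i" by simp
  have "(\<Sum>j=k..n. (-1) ^ (j - k) * of_nat (j choose k) * of_nat (i choose j) :: complex)
      = (\<Sum>j=k..i. (-1) ^ (j - k) * of_nat (j choose k) * of_nat (i choose j))"
    using assms by (intro sum.mono_neutral_right) auto
  also have "\<dots> = (\<Sum>l=0..i-k. (-1) ^ l * of_nat ((l + k) choose k) * of_nat (i choose (l + k)))"
    using sum.shift_bounds_cl_nat_ivl[of "\<lambda>j. (-1) ^ (j - k) * of_nat (j choose k) * of_nat (i choose j) :: complex" 0 k "i - k"] ki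
    by simp
  also have "\<dots> = (\<Sum>l=0..i-k. of_nat (i choose k) * ((-1) ^ l * of_nat ((i - k) choose l)))"
  proof (rule sum.cong)
    fix l assume "l \<in> {0..i-k}"
    then have "k \<le> l + k" "l + k \<le> i" using ki by auto
    from choose_mult[OF this] have "(i choose (l + k)) * ((l + k) choose k) = (i choose k) * ((i - k) choose l)"
      by simp
    then have "(of_nat ((l + k) choose k) * of_nat (i choose (l + k)) :: complex) = of_nat (i choose k) * of_nat ((i - k) choose l)"
      by (metis mult.commute of_nat_mult)
    then show "(-1) ^ l * of_nat ((l + k) choose k) * of_nat (i choose (l + k)) =
        (of_nat (i choose k) * ((-1) ^ l * of_nat ((i - k) choose l)) :: complex)"
      by (simp add: algebra_simps)
  qed simp
  also have "\<dots> = of_nat (i choose k) * (\<Sum>l\<le>i-k. (-1) ^ l * of_nat ((i - k) choose l))"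
    by (simp add: sum_distrib_left atLeast0AtMost)
  also have "\<dots> = (if i = k then 1 else 0)"
  proof (cases "i = k")
    case True then show ?thesis by simp
  next
    case False
    then have "i - k > 0" using ki by simp
    then show ?thesis using False choose_alternating_sum[of "i - k"] by simp
  qed
  finally show ?thesis .
qed

theorem mainTheorem9:
  fixes n k :: nat and a b c0 cinf :: complex
  assumes "k \<le> n"
  shows "(GEuler n (int k) a b c0 cinf =
           (\<Sum>j=k..n. (-1) ^ (j - k) * of_nat (j choose k)
              * rising_inc (c0 + cinf) (n - j) b * HS_Stirling n (int (n - j)) (- a) b cinf)) \<and>
         (rising_inc (c0 + cinf) (n - k) b * HS_Stirling n (int (n - k)) (- a) b cinf =
           (\<Sum>j=k..n. of_nat (j choose k) * GEuler n (int j) a b c0 cinf))"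
proof
  have G: "GG a b c0 cinf n k' = (\<Sum>j=k'..n. of_nat (j choose k') * GEuler n (int j) a b c0 cinf)" for k'
    unfolding GG_def by (rule sum.mono_neutral_right) auto
  have FG: "rising_inc (c0 + cinf) (n - j) b * HS_Stirling n (int (n - j)) (- a) b cinf = GG a b c0 cinf n j"
    if "j \<le> n" for j
    using FF_GG[of a b c0 cinf n j] that unfolding FF_def by simp
  show "rising_inc (c0 + cinf) (n - k) b * HS_Stirling n (int (n - k)) (- a) b cinf =
           (\<Sum>j=k..n. of_nat (j choose k) * GEuler n (int j) a b c0 cinf)"
    using FG[OF assms] G by simp
  have "(\<Sum>j=k..n. (-1) ^ (j - k) * of_nat (j choose k)
              * rising_inc (c0 + cinf) (n - j) b * HS_Stirling n (int (n - j)) (- a) b cinf)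
     = (\<Sum>j=k..n. (-1) ^ (j - k) * of_nat (j choose k) * GG a b c0 cinf n j)"
    by (rule sum.cong) (simp_all add: FG[symmetric] mult.assoc)
  also have "\<dots> = (\<Sum>j=k..n. \<Sum>i\<le>n. GEuler n (int i) a b c0 cinf * ((-1) ^ (j - k) * of_nat (j choose k) * of_nat (i choose j)))"
    unfolding GG_def sum_distrib_left by (simp add: algebra_simps)
  also have "\<dots> = (\<Sum>i\<le>n. GEuler n (int i) a b c0 cinf * (\<Sum>j=k..n. (-1) ^ (j - k) * of_nat (j choose k) * of_nat (i choose j)))"
    unfolding sum_distrib_left by (rule sum.swap)
  also have "\<dots> = (\<Sum>i\<le>n. GEuler n (int i) a b c0 cinf * (if i = k then 1 else 0))"
    by (rule sum.cong) (simp_all add: alt_inner)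
  also have "\<dots> = GEuler n (int k) a b c0 cinf"
    using assms by (simp add: if_distrib[of "\<lambda>x. GEuler n (int _) a b c0 cinf * x"] cong: if_cong)
  finally show "GEuler n (int k) a b c0 cinf =
           (\<Sum>j=k..n. (-1) ^ (j - k) * of_nat (j choose k)
              * rising_inc (c0 + cinf) (n - j) b * HS_Stirling n (int (n - j)) (- a) b cinf)" by simp
qed

end
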